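(* Suppose $k,m\ge 0$ are integers, $1\le d_1\le\cdots\le d_k$ and $1\le e_1<e_2<\cdots<e_\ell$ are integers, and $$\sum_{i=1}^k(1+2^{-d_i})=m+\sum_{i=1}^\ell 2^{-e_i}.$$ Then $m\ge\ell$. *)

theory Defs
  imports Complex_Main
begin

end

theory Submission
  imports Defs
begin

lemma geom_lt: "(\<Sum>j<N. (2::nat)^j) < 2^N"
  by (induction N) auto

lemma sum_B_lt: assumes "B \<subseteq> {..<N}" shows "(\<Sum>j\<in>B. (2::nat)^j) < 2^N"
proof -
  have "(\<Sum>j\<in>B. (2::nat)^j) \<le> (\<Sum>j<N. 2^j)"
    by (rule sum_mono2) (use assms in auto)
  thus ?thesis using geom_lt[of N] by linarith
qed

lemma sum_list_filter_split:
  "sum_list (map f xs) = sum_list (map f (filter P xs)) + sum_list (map f (filter (\<lambda>x. \<not> P x) xs))"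
  for f :: "'a \<Rightarrow> nat"
  by (induction xs) auto

lemma popcount_bound:
  "\<forall>xs B A. B \<subseteq> {..<N} \<longrightarrow> sum_list (map (\<lambda>a. (2::nat)^a) xs) = (\<Sum>j\<in>B. 2^j) + 2^N * A
     \<longrightarrow> card B \<le> length xs"
proof (induction N)
  case 0
  then show ?case by auto
next
  case (Suc N)
  show ?case
  proof (intro allI impI)
    fix xs B A
    assume sub: "B \<subseteq> {..<Suc N}"
      and eq: "sum_list (map (\<lambda>a. (2::nat)^a) xs) = (\<Sum>j\<in>B. 2^j) + 2^Suc N * A"
    define c where "c = length (filter (\<lambda>a. a = 0) xs)"
    define ys where "ys = filter (\<lambda>a. \<not> a = 0) xs"
    define r :: nat where "r = (if 0 \<in> B then 1 else 0)"
    define B' where "B' = {j. Suc j \<in> B}"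
    define zs where "zs = replicate (c div 2) (0::nat) @ map (\<lambda>a. a - 1) ys"
    have finB: "finite B" using sub finite_subset by blast
    have lenxs: "length xs = c + length ys"
      unfolding c_def ys_def using sum_length_filter_compl[of "\<lambda>a. a = 0" xs] by simp
    have z: "sum_list (map (\<lambda>a. (2::nat)^a) (filter (\<lambda>a. a = 0) xs)) = c"
      unfolding c_def by (induction xs) auto
    have y: "sum_list (map (\<lambda>a. (2::nat)^a) ys) = 2 * sum_list (map (\<lambda>a. (2::nat)^a) (map (\<lambda>a. a - 1) ys))"
      unfolding ys_def by (induction xs) (auto simp: power_eq_if)
    have lhs: "sum_list (map (\<lambda>a. (2::nat)^a) xs) = c + 2 * sum_list (map (\<lambda>a. (2::nat)^a) (map (\<lambda>a. a - 1) ys))"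
      using sum_list_filter_split[of "\<lambda>a. (2::nat)^a" xs "\<lambda>a. a = 0"] z y ys_def by simp
    have Bsplit: "B = (B \<inter> {0}) \<union> Suc ` B'"
    proof (rule set_eqI)
      fix x show "x \<in> B \<longleftrightarrow> x \<in> (B \<inter> {0}) \<union> Suc ` B'"
        unfolding B'_def by (cases x) auto
    qed
    have fB': "finite B'" unfolding B'_def
      using finite_vimageI[OF finB, of Suc] by (simp add: vimage_def)
    have sumB: "(\<Sum>j\<in>B. (2::nat)^j) = r + 2 * (\<Sum>j\<in>B'. 2^j)"
    proof -
      have "(\<Sum>j\<in>B. (2::nat)^j) = (\<Sum>j\<in>B \<inter> {0}. 2^j) + (\<Sum>j\<in>Suc ` B'. 2^j)"
        by (subst Bsplit, rule sum.union_disjoint) (use finB fB' in auto)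
      also have "(\<Sum>j\<in>B \<inter> {0}. (2::nat)^j) = r" unfolding r_def by auto
      also have "(\<Sum>j\<in>Suc ` B'. (2::nat)^j) = (\<Sum>j\<in>B'. 2^Suc j)"
        by (rule sum.reindex_cong[of Suc]) auto
      also have "\<dots> = 2 * (\<Sum>j\<in>B'. 2^j)" by (simp add: sum_distrib_left)
      finally show ?thesis .
    qed
    have cardB: "card B = r + card B'"
    proof -
      have "card B = card (B \<inter> {0}) + card (Suc ` B')"
        by (subst Bsplit, rule card_Un_disjoint) (use finB fB' in auto)
      moreover have "card (Suc ` B') = card B'" by (simp add: card_image)
      moreover have "card (B \<inter> {0}) = r" unfolding r_def by auto
      ultimately show ?thesis by simp
    qed
    define Y where "Y = sum_list (map (\<lambda>a. (2::nat)^a) (map (\<lambda>a. a - 1) ys))"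
    define Z where "Z = (\<Sum>j\<in>B'. (2::nat)^j)"
    have r01: "r \<le> 1" unfolding r_def by auto
    have main: "c + 2 * Y = r + 2 * Z + 2 * 2^N * A"
      using eq lhs sumB unfolding Y_def Z_def by simp
    hence m2: "c + 2 * Y = r + 2 * (Z + 2^N * A)" by (simp add: algebra_simps)
    have "(c + 2 * Y) mod 2 = (r + 2 * (Z + 2^N * A)) mod 2" by (simp only: m2)
    also have "\<dots> = r mod 2" by (metis mod_mult_self2 mult.commute)
    finally have "c mod 2 = r mod 2" by simp
    moreover have "r mod 2 = r" using r01 by (cases r) auto
    ultimately have "c mod 2 = r" by simp
    hence "c = 2 * (c div 2) + r" using div_mult_mod_eq[of c 2] by linarith
    hence "2 * (c div 2 + Y) = 2 * (Z + 2^N * A)" using main by simp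
    hence "c div 2 + Y = Z + 2^N * A" by simp
    hence zeq: "sum_list (map (\<lambda>a. (2::nat)^a) zs) = (\<Sum>j\<in>B'. 2^j) + 2^N * A"
      unfolding zs_def Y_def Z_def by (simp add: sum_list_replicate)
    have "B' \<subseteq> {..<N}" using sub unfolding B'_def by auto
    hence "card B' \<le> length zs" using Suc.IH zeq by blast
    hence "card B' \<le> c div 2 + length ys" unfolding zs_def by simp
    moreover have "r + c div 2 \<le> c" using \<open>c = 2 * (c div 2) + r\<close> by linarith
    ultimately show "card B \<le> length xs" using cardB lenxs by linarith
  qed
qed


theorem mainTheorem8:
  fixes k m l :: nat and d e :: "nat \<Rightarrow> nat"
  assumes d_pos: "\<forall>i\<in>{1..k}. 1 \<le> d i"
    and d_mono: "\<forall>i\<in>{1..k}. \<forall>j\<in>{1..k}. i \<le> j \<longrightarrow> d i \<le> d j"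
    and e_pos: "\<forall>i\<in>{1..l}. 1 \<le> e i"
    and e_strict: "\<forall>i\<in>{1..l}. \<forall>j\<in>{1..l}. i < j \<longrightarrow> e i < e j"
    and eq: "(\<Sum>i=1..k. (1 + (1/2::real) ^ d i)) = real m + (\<Sum>i=1..l. (1/2::real) ^ e i)"
  shows "m \<ge> l"
proof -
  define N where "N = (\<Sum>i=1..k. d i) + (\<Sum>i=1..l. e i)"
  have dle: "d i \<le> N" if "i \<in> {1..k}" for i
  proof -
    have "d i \<le> (\<Sum>i=1..k. d i)" by (rule member_le_sum) (use that in auto)
    thus ?thesis unfolding N_def by linarith
  qed
  have ele: "e i \<le> N" if "i \<in> {1..l}" for i
  proof -
    have "e i \<le> (\<Sum>i=1..l. e i)" by (rule member_le_sum) (use that in auto)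
    thus ?thesis unfolding N_def by linarith
  qed
  have pw: "(1/2::real)^a * 2^N = 2^(N-a)" if "a \<le> N" for a
  proof -
    have "(2::real)^N = 2^a * 2^(N-a)" using that by (simp add: power_add[symmetric])
    thus ?thesis by (simp add: power_one_over)
  qed
  define X where "X = (\<Sum>i=1..k. (2::nat)^(N - d i))"
  define B where "B = (\<lambda>i. N - e i) ` {1..l}"
  have inj: "inj_on (\<lambda>i. N - e i) {1..l}"
  proof (rule inj_onI)
    fix i j assume i: "i \<in> {1..l}" and j: "j \<in> {1..l}" and h: "N - e i = N - e j"
    have "e i = e j" using h ele[OF i] ele[OF j] by linarith
    thus "i = j" using e_strict i j by (metis less_irrefl nat_neq_iff)
  qed
  have cardB: "card B = l" unfolding B_def using card_image[OF inj] by simp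
  have subB: "B \<subseteq> {..<N}"
  proof
    fix x assume "x \<in> B"
    then obtain i where i: "i \<in> {1..l}" and x: "x = N - e i" unfolding B_def by auto
    have "1 \<le> e i" using e_pos i by auto
    thus "x \<in> {..<N}" using ele[OF i] x by auto
  qed
  have sumB: "(\<Sum>i=1..l. (2::nat)^(N - e i)) = (\<Sum>j\<in>B. 2^j)"
    unfolding B_def using sum.reindex[OF inj, of "\<lambda>j. (2::nat)^j"] by (simp add: o_def)
  have "(\<Sum>i=1..k. (1 + (1/2::real) ^ d i)) * 2^N = (\<Sum>i=1..k. (2^N + 2^(N - d i)))"
    unfolding sum_distrib_right by (rule sum.cong) (auto simp: distrib_right pw dle)
  also have "\<dots> = real (k * 2^N + X)" unfolding X_def by (simp add: sum.distrib)
  finally have L: "(\<Sum>i=1..k. (1 + (1/2::real) ^ d i)) * 2^N = real (k * 2^N + X)" .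
  have "(real m + (\<Sum>i=1..l. (1/2::real) ^ e i)) * 2^N = real m * 2^N + (\<Sum>i=1..l. 2^(N - e i))"
    unfolding distrib_right sum_distrib_right by (simp add: pw ele)
  also have "\<dots> = real (m * 2^N + (\<Sum>i=1..l. (2::nat)^(N - e i)))" by simp
  finally have R: "(real m + (\<Sum>i=1..l. (1/2::real) ^ e i)) * 2^N = real (m * 2^N + (\<Sum>i=1..l. (2::nat)^(N - e i)))" .
  have neq: "k * 2^N + X = m * 2^N + (\<Sum>j\<in>B. 2^j)"
    using L R eq sumB by (metis of_nat_eq_iff)
  have "(\<Sum>j\<in>B. (2::nat)^j) < 2^N" by (rule sum_B_lt[OF subB])
  hence "k * 2^N < (m + 1) * 2^N" using neq by simp
  hence km: "k \<le> m" by (metis mult_less_cancel2 less_Suc_eq_le add.commute plus_1_eq_Suc)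
  define xs where "xs = map (\<lambda>i. N - d i) [1..<k+1]"
  have Xxs: "X = sum_list (map (\<lambda>a. (2::nat)^a) xs)"
  proof -
    have "{1..k} = {1..<k+1}" by auto
    hence "X = (\<Sum>i\<in>{1..<k+1}. (2::nat)^(N - d i))" unfolding X_def by simp
    also have "\<dots> = sum_list (map (\<lambda>i. (2::nat)^(N - d i)) [1..<k+1])"
      by (metis distinct_upt set_upt sum_list_distinct_conv_sum_set)
    finally show ?thesis unfolding xs_def by (simp add: o_def)
  qed
  have "X = (\<Sum>j\<in>B. 2^j) + 2^N * (m - k)"
    using neq km by (simp add: diff_mult_distrib algebra_simps)
  hence eqX: "sum_list (map (\<lambda>a. (2::nat)^a) xs) = (\<Sum>j\<in>B. 2^j) + 2^N * (m - k)"
    using Xxs by simp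
  have "card B \<le> length xs" by (rule popcount_bound[rule_format, OF subB eqX])
  moreover have "length xs = k" unfolding xs_def by (simp only: length_map length_upt)
  ultimately have "l \<le> k" using cardB by simp
  thus ?thesis using km by simp
qed

end
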